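(* Let $p\geq2$, $n_1,\dots,n_l\geq1$ be integers with $\sum_j p^{-n_j}=1$ and let $T_p$ be the map satisfying Condition 1 with slopes $\Lambda_j=p^{n_j}$. Let $U_\Bbbk$ be a quantization of $T_p$ with respect to the partition of $[0,1]$ into $N_\Bbbk=p^\Bbbk$ equal intervals, let $\psi_\Bbbk$ be a normalized eigenvector of $U_\Bbbk$ and $\mu_\Bbbk$ the associated measure. Let $n_{\mathrm E}=\lfloor\log N_\Bbbk/\log\Lambda_{\max}\rfloor$ and write $n_{\mathrm E}=qn+r$ with integers $q,n\geq1$, $0\leq r<n$. Then $$p_{n_{\mathrm E},v}(\mu_\Bbbk)\leq q\,p_{n,v}(\mu_\Bbbk)+p_{r,v}(\mu_\Bbbk).$$
   Context: Condition 1: $[0,1]$ is divided into consecutive intervals $I_1,\dots,I_l$ with $|I_j|=\Lambda_j^{-1}$ and $T_p$ is affine with slope $\Lambda_j$ on $I_j$ mapping $I_j$ onto $[0,1]$. Let $E_i=[(i-1)/N_\Bbbk,i/N_\Bbbk]$ and $B(i,j)=|E_i\cap T_p^{-1}E_j|/|E_i|$; a quantization is a unitary $U_\Bbbk$ with $B(j,i)=|U_\Bbbk(i,j)|^2$. $\mathrm{Op}_\Bbbk(f)$ is the diagonal matrix with $(i,i)$ entry $N_\Bbbk\int_{E_i}f\,dx$, and $\mu_\Bbbk$ is the probability measure with $\int f\,d\mu_\Bbbk=\langle\psi_\Bbbk,\mathrm{Op}_\Bbbk(f)\psi_\Bbbk\rangle$. For a word $\varepsilon=\varepsilon_0\dots\varepsilon_{n-1}\in\{1,\dots,l\}^n$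 let $[\![\varepsilon]\!]=\bigcap_{i=0}^{n-1}T_p^{-i}I_{\varepsilon_i}$ and $v_\varepsilon=\prod_{i=0}^{n-1}\Lambda_{\varepsilon_i}^{-1/2}$. For a measure $\nu$, the pressure is $p_{n,v}(\nu)=-\sum_{|\varepsilon|=n}\nu([\![\varepsilon]\!])\log\big(v_\varepsilon^2\,\nu([\![\varepsilon]\!])\big)$ (with $0\log0=0$; for $n=0$ it is $0$). *)

theory Defs
  imports "HOL-Analysis.Analysis"
begin

text \<open>Slopes: \<Lambda>_j = p ^ nj j, j = 1..l. Right endpoint of I_j.\<close>
definition aend :: "nat \<Rightarrow> (nat \<Rightarrow> nat) \<Rightarrow> nat \<Rightarrow> real" where
  "aend p nj j = (\<Sum>i\<in>{1..j}. 1 / real p ^ nj i)"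

definition Iv :: "nat \<Rightarrow> (nat \<Rightarrow> nat) \<Rightarrow> nat \<Rightarrow> real set" where
  "Iv p nj j = {aend p nj (j - 1) .. aend p nj j}"

text \<open>The map T_p: affine with slope p^(nj j) on I_j, mapping I_j onto [0,1].
  At the common endpoints of consecutive intervals the half-open convention is used
  (a null set), and T_p 1 = 1.\<close>
definition Tp :: "nat \<Rightarrow> nat \<Rightarrow> (nat \<Rightarrow> nat) \<Rightarrow> real \<Rightarrow> real" where
  "Tp p l nj x =
     (if \<exists>j\<in>{1..l}. aend p nj (j - 1) \<le> x \<and> x < aend p nj j
      then (let j = (LEAST j. j \<in> {1..l} \<and> aend p nj (j - 1) \<le> x \<and> x < aend p nj j)
            in real p ^ nj j * (x - aend p nj (j - 1)))
      else 1)"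

definition Ecell :: "nat \<Rightarrow> nat \<Rightarrow> real set" where
  "Ecell N i = {(real i - 1) / real N .. real i / real N}"

definition Bmat :: "nat \<Rightarrow> nat \<Rightarrow> (nat \<Rightarrow> nat) \<Rightarrow> nat \<Rightarrow> nat \<Rightarrow> nat \<Rightarrow> real" where
  "Bmat p l nj N i j =
     measure lebesgue (Ecell N i \<inter> {x. Tp p l nj x \<in> Ecell N j}) / measure lebesgue (Ecell N i)"

definition is_quantization ::
  "nat \<Rightarrow> nat \<Rightarrow> (nat \<Rightarrow> nat) \<Rightarrow> nat \<Rightarrow> (nat \<Rightarrow> nat \<Rightarrow> complex) \<Rightarrow> bool" where
  "is_quantization p l nj N U \<longleftrightarrow>
     (\<forall>i\<in>{1..N}. \<forall>j\<in>{1..N}.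
        (\<Sum>k\<in>{1..N}. cnj (U k i) * U k j) = (if i = j then 1 else 0)) \<and>
     (\<forall>i\<in>{1..N}. \<forall>j\<in>{1..N}.
        (\<Sum>k\<in>{1..N}. U i k * cnj (U j k)) = (if i = j then 1 else 0)) \<and>
     (\<forall>i\<in>{1..N}. \<forall>j\<in>{1..N}. Bmat p l nj N j i = (cmod (U i j))\<^sup>2)"

definition is_normalized_eigenvector ::
  "nat \<Rightarrow> (nat \<Rightarrow> nat \<Rightarrow> complex) \<Rightarrow> (nat \<Rightarrow> complex) \<Rightarrow> bool" where
  "is_normalized_eigenvector N U \<psi> \<longleftrightarrow>
     (\<Sum>i\<in>{1..N}. (cmod (\<psi> i))\<^sup>2) = 1 \<and>
     (\<exists>c. \<forall>i\<in>{1..N}. (\<Sum>j\<in>{1..N}. U i j * \<psi> j) = c * \<psi> i)"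

text \<open>The measure \<mu>: \<integral> f d\<mu> = \<langle>\<psi>, Op(f) \<psi>\<rangle> = \<Sum>_i |\<psi>_i|^2 N \<integral>_{E_i} f.\<close>
definition mu_of :: "nat \<Rightarrow> (nat \<Rightarrow> complex) \<Rightarrow> real measure" where
  "mu_of N \<psi> = density lborel
     (\<lambda>x. ennreal (\<Sum>i\<in>{1..N}. (cmod (\<psi> i))\<^sup>2 * real N * indicator (Ecell N i) x))"

definition words :: "nat \<Rightarrow> nat \<Rightarrow> nat list set" where
  "words l n = {\<epsilon>. length \<epsilon> = n \<and> set \<epsilon> \<subseteq> {1..l}}"

definition cyl :: "nat \<Rightarrow> nat \<Rightarrow> (nat \<Rightarrow> nat) \<Rightarrow> nat list \<Rightarrow> real set" where
  "cyl p l nj \<epsilon> = (\<Inter>i<length \<epsilon>. (Tp p l nj ^^ i) -` Iv p nj (\<epsilon> ! i))"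

definition vw :: "nat \<Rightarrow> (nat \<Rightarrow> nat) \<Rightarrow> nat list \<Rightarrow> real" where
  "vw p nj \<epsilon> = (\<Prod>i<length \<epsilon>. (real p ^ nj (\<epsilon> ! i)) powr (-1/2))"

definition pressure :: "nat \<Rightarrow> nat \<Rightarrow> (nat \<Rightarrow> nat) \<Rightarrow> real measure \<Rightarrow> nat \<Rightarrow> real" where
  "pressure p l nj \<nu> n =
     - (\<Sum>\<epsilon>\<in>words l n.
          (let m = measure \<nu> (cyl p l nj \<epsilon>)
           in if m = 0 then 0 else m * ln ((vw p nj \<epsilon>)\<^sup>2 * m)))"

end

theory Submission
  imports Defs
begin

locale wm =
  fixes p l :: nat and nj :: "nat \<Rightarrow> nat"
  assumes p2: "p \<ge> 2" and l1: "l \<ge> 1"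
    and nj1: "\<forall>j\<in>{1..l}. nj j \<ge> 1"
    and sum1: "(\<Sum>j\<in>{1..l}. 1 / real p ^ nj j) = 1"
begin

abbreviation "a \<equiv> aend p nj"
abbreviation "T \<equiv> Tp p l nj"
definition "M = Max (nj ` {1..l})"

lemma M_ge: "j \<in> {1..l} \<Longrightarrow> nj j \<le> M"
  unfolding M_def by (intro Max_ge) auto

lemma M_ge1: "M \<ge> 1"
  using M_ge[of 1] nj1 l1 by force

lemma ppos: "real p > 0" using p2 by simp

lemma a0: "a 0 = 0" by (simp add: aend_def)
lemma aSuc: "a (Suc j) = a j + 1 / real p ^ nj (Suc j)"
  by (simp add: aend_def)
lemma al: "a l = 1" using sum1 by (simp add: aend_def)

lemma a_strict: "i < j \<Longrightarrow> a i < a j"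
proof (induction j)
  case 0 then show ?case by simp
next
  case (Suc j)
  have "a j < a (Suc j)" using ppos by (simp add: aSuc)
  then show ?case using Suc by (cases "i = j") auto
qed

lemma a_mono: "i \<le> j \<Longrightarrow> a i \<le> a j"
  using a_strict by (cases "i = j") (auto simp: le_less)

lemma a_diff: "j \<ge> 1 \<Longrightarrow> a j = a (j - 1) + 1 / real p ^ nj j"
  using aSuc[of "j-1"] by simp

lemma a_int: assumes "j \<le> l" "t \<ge> M"
  shows "a j * real p ^ t = real (\<Sum>i\<in>{1..j}. p ^ (t - nj i))"
proof -
  have "a j * real p ^ t = (\<Sum>i\<in>{1..j}. real p ^ t / real p ^ nj i)"
    by (simp add: aend_def sum_distrib_right)
  also have "\<dots> = (\<Sum>i\<in>{1..j}. real (p ^ (t - nj i)))"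
  proof (rule sum.cong)
    fix i assume "i \<in> {1..j}"
    then have "nj i \<le> t" using M_ge[of i] assms by auto
    then have "real p ^ (t - nj i) = real p ^ t / real p ^ nj i"
      using ppos by (intro power_diff) auto
    then show "real p ^ t / real p ^ nj i = real (p ^ (t - nj i))"
      by (simp add: of_nat_power)
  qed simp
  finally show ?thesis by simp
qed

lemma a_int': assumes "j \<le> l" "t \<ge> M" obtains A :: nat where "a j * real p ^ t = real A"
  using a_int[OF assms] by blast

lemma Tp_piece:
  assumes j: "j \<in> {1..l}" and x: "a (j - 1) \<le> x" "x < a j"
  shows "T x = real p ^ nj j * (x - a (j - 1))"
proof -
  have uniq: "j' = j" if "j' \<in> {1..l}" "a (j' - 1) \<le> x" "x < a j'" for j'
  proof (rule ccontr)
    assume "j' \<noteq> j"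
    then consider "j' < j" | "j < j'" by linarith
    then show False
    proof cases
      case 1 then have "a j' \<le> a (j - 1)" by (intro a_mono) auto
      then show ?thesis using that x by linarith
    next
      case 2 then have "a j \<le> a (j' - 1)" by (intro a_mono) auto
      then show ?thesis using that x by linarith
    qed
  qed
  have ex: "\<exists>j\<in>{1..l}. a (j - 1) \<le> x \<and> x < a j" using j x by blast
  have L: "(LEAST j. j \<in> {1..l} \<and> a (j - 1) \<le> x \<and> x < a j) = j"
  proof (rule Least_equality)
    show "j \<in> {1..l} \<and> a (j - 1) \<le> x \<and> x < a j" using j x by blast
    fix y assume "y \<in> {1..l} \<and> a (y - 1) \<le> x \<and> x < a y"
    then have "y = j" using uniq by blast
    then show "j \<le> y" by simp
  qed
  have "T x = (let j = (LEAST j. j \<in> {1..l} \<and> a (j - 1) \<le> x \<and> x < a j)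
            in real p ^ nj j * (x - a (j - 1)))"
    unfolding Tp_def using ex by (rule if_P)
  also have "\<dots> = real p ^ nj j * (x - a (j - 1))" unfolding L Let_def ..
  finally show ?thesis .
qed

definition Jt :: "nat \<Rightarrow> nat \<Rightarrow> real set" where
  "Jt t d = {real d / real p ^ t <..< (real d + 1) / real p ^ t}"

lemma Jt_ne: "Jt t d \<noteq> {}"
proof -
  have "real d / real p ^ t < (real d + 1) / real p ^ t"
    using ppos by (simp add: divide_strict_right_mono)
  then show ?thesis unfolding Jt_def by auto
qed

lemma Jt_open: "open (Jt t d)" unfolding Jt_def by simp

lemma affine_image:
  fixes c a' lo hi :: real
  assumes "c > 0"
  shows "(\<lambda>x. c * (x - a')) ` {lo<..<hi} = {c * (lo - a')<..<c * (hi - a')}"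
proof
  show "(\<lambda>x. c * (x - a')) ` {lo<..<hi} \<subseteq> {c * (lo - a')<..<c * (hi - a')}"
    using assms by auto
  show "{c * (lo - a')<..<c * (hi - a')} \<subseteq> (\<lambda>x. c * (x - a')) ` {lo<..<hi}"
  proof
    fix y assume y: "y \<in> {c * (lo - a')<..<c * (hi - a')}"
    have "y = c * ((a' + y / c) - a')" using assms by simp
    moreover have "a' + y / c \<in> {lo<..<hi}"
      using y assms by (auto simp: field_simps)
    ultimately show "y \<in> (\<lambda>x. c * (x - a')) ` {lo<..<hi}" by blast
  qed
qed

lemma aux_div: "(c::real) > 0 \<Longrightarrow> s > 0 \<Longrightarrow> c * (x / (c * s) - y / (c * s)) = (x - y) / s"
  by (simp add: field_simps)

lemma piece:
  assumes t: "M \<le> t" and d: "d < p ^ t"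
  obtains j d' where "j \<in> {1..l}" "d' < p ^ (t - nj j)"
    "a (j - 1) \<le> real d / real p ^ t" "(real d + 1) / real p ^ t \<le> a j"
    "T ` Jt t d = Jt (t - nj j) d'"
proof -
  define x0 where "x0 = real d / real p ^ t"
  have pt: "real p ^ t > 0" using ppos by simp
  have "real d < real p ^ t" using d by (metis of_nat_less_iff of_nat_power)
  then have x0l: "x0 < a l" using pt by (simp add: al x0_def)
  have x0ge: "0 \<le> x0" by (simp add: x0_def)
  define j where "j = (LEAST j. x0 < a j)"
  have jl: "j \<le> l" unfolding j_def using x0l by (rule Least_le)
  have xj: "x0 < a j" unfolding j_def using x0l by (rule LeastI)
  have j0: "j \<noteq> 0"
  proof
    assume "j = 0" then show False using xj x0ge a0 by simp
  qed
  have xj1: "a (j - 1) \<le> x0"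
  proof -
    have "\<not> x0 < a (j - 1)" unfolding j_def
      by (rule not_less_Least) (use j0 in \<open>simp add: j_def[symmetric]\<close>)
    then show ?thesis by simp
  qed
  have jin: "j \<in> {1..l}" using j0 jl by auto
  have njt: "nj j \<le> t" using M_ge[OF jin] t by simp
  obtain A where A: "a j * real p ^ t = real A" using a_int'[OF jl t] .
  have jl1: "j - 1 \<le> l" using jl by simp
  obtain B where B: "a (j - 1) * real p ^ t = real B" using a_int'[OF jl1 t] .
  have "real d < a j * real p ^ t" using xj pt unfolding x0_def by (simp add: pos_divide_less_eq)
  then have "real d < real A" using A by simp
  then have dA: "d + 1 \<le> A" by simp
  have "a (j - 1) * real p ^ t \<le> real d" using xj1 pt unfolding x0_def by (simp add: pos_le_divide_eq)
  then have "real B \<le> real d" using B by simp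
  then have Bd: "B \<le> d" by simp
  define n where "n = nj j"
  define s where "s = t - n"
  have tns: "t = n + s" using njt unfolding n_def s_def by simp
  have ppow: "real p ^ t = real p ^ n * real p ^ s" unfolding tns by (rule power_add)
  have pn: "real p ^ n > 0" "real p ^ s > 0" using ppos by simp_all
  have AB: "real A = real B + real p ^ s"
  proof -
    have "real A = (a (j - 1) + 1 / real p ^ n) * real p ^ t"
      using A a_diff[of j] j0 unfolding n_def by simp
    also have "\<dots> = a (j - 1) * real p ^ t + real p ^ t / real p ^ n"
      by (simp add: distrib_right)
    also have "real p ^ t / real p ^ n = real p ^ s"
      unfolding ppow using pn by simp
    finally show ?thesis using B by simp
  qed
  define d' where "d' = d - B"
  have "real (d + 1) \<le> real (B + p ^ s)" using dA AB by (simp add: of_nat_power)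
  then have "d + 1 \<le> B + p ^ s" by (simp only: of_nat_le_iff)
  then have d'lt: "d' < p ^ (t - nj j)" unfolding d'_def using Bd by (simp add: s_def n_def)
  have "real (d + 1) \<le> a j * real p ^ t" using dA A by simp
  then have hi: "(real d + 1) / real p ^ t \<le> a j"
    using pt by (simp add: pos_divide_le_eq)
  have aB: "a (j - 1) = real B / real p ^ t" using B pt by (simp add: eq_divide_eq)
  have d'r: "real d' = real d - real B" using Bd by (simp add: d'_def)
  have img: "T ` Jt t d = Jt (t - nj j) d'"
  proof -
    have "T ` Jt t d = (\<lambda>x. real p ^ nj j * (x - a (j - 1))) ` Jt t d"
    proof (rule image_cong[OF refl])
      fix x assume "x \<in> Jt t d"
      then have "a (j - 1) \<le> x" "x < a j" using xj1 hi unfolding Jt_def x0_def by auto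
      then show "T x = real p ^ nj j * (x - a (j - 1))" using Tp_piece[OF jin] by simp
    qed
    also have "\<dots> = {real p ^ nj j * (real d / real p ^ t - a (j - 1))<..<
                       real p ^ nj j * ((real d + 1) / real p ^ t - a (j - 1))}"
      unfolding Jt_def using ppos by (intro affine_image) simp
    also have "real p ^ nj j * (real d / real p ^ t - a (j - 1)) = real d' / real p ^ (t - nj j)"
      unfolding aB d'r ppow n_def[symmetric] s_def[symmetric] using pn by (rule aux_div)
    also have "real p ^ nj j * ((real d + 1) / real p ^ t - a (j - 1)) = (real d' + 1) / real p ^ (t - nj j)"
    proof -
      have "real p ^ n * ((real d + 1) / (real p ^ n * real p ^ s) - real B / (real p ^ n * real p ^ s))
           = ((real d + 1) - real B) / real p ^ s" using pn by (rule aux_div)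
      then show ?thesis unfolding aB d'r ppow n_def[symmetric] s_def[symmetric] by simp
    qed
    finally show ?thesis unfolding Jt_def .
  qed
  show ?thesis using that[OF jin d'lt] xj1 hi img by (simp add: x0_def)
qed

lemma Iv_sub:
  assumes "a (j - 1) \<le> lo" "hi \<le> a j"
  shows "{lo<..<hi} \<subseteq> Iv p nj j"
  using assms unfolding Iv_def by auto

lemma Iv_disj:
  assumes j: "j \<in> {1..l}" and j': "j' \<in> {1..l}" "j' \<noteq> j"
    and "a (j - 1) \<le> lo" "hi \<le> a j"
  shows "{lo<..<hi} \<inter> Iv p nj j' = {}"
proof -
  consider "j' < j" | "j < j'" using j' by linarith
  then show ?thesis
  proof cases
    case 1 then have "a j' \<le> a (j - 1)" by (intro a_mono) auto
    then show ?thesis using assms unfolding Iv_def by auto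
  next
    case 2 then have "a j \<le> a (j' - 1)" by (intro a_mono) auto
    then show ?thesis using assms unfolding Iv_def by auto
  qed
qed

lemma cyl_Nil: "cyl p l nj [] = UNIV" by (simp add: cyl_def)

lemma cyl_Cons: "cyl p l nj (j # e) = Iv p nj j \<inter> T -` cyl p l nj e"
proof -
  have "cyl p l nj (j # e) = (\<Inter>i\<in>insert 0 (Suc ` {..<length e}). (T ^^ i) -` Iv p nj ((j # e) ! i))"
    unfolding cyl_def by (simp add: lessThan_Suc_eq_insert_0)
  also have "\<dots> = Iv p nj j \<inter> (\<Inter>i<length e. T -` ((T ^^ i) -` Iv p nj (e ! i)))"
  proof -
    have "(T ^^ Suc i) -` X = T -` ((T ^^ i) -` X)" for i X
      by (simp only: funpow_Suc_right vimage_comp)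
    then show ?thesis by simp
  qed
  also have "\<dots> = Iv p nj j \<inter> T -` cyl p l nj e"
    unfolding cyl_def by (simp add: vimage_INT)
  finally show ?thesis .
qed

lemma cyl_snoc: "cyl p l nj (e @ [j]) \<subseteq> cyl p l nj e"
proof
  fix x assume x: "x \<in> cyl p l nj (e @ [j])"
  have "(T ^^ i) x \<in> Iv p nj (e ! i)" if "i < length e" for i
  proof -
    have "(T ^^ i) x \<in> Iv p nj ((e @ [j]) ! i)" using x that unfolding cyl_def by simp
    then show ?thesis using that by (simp add: nth_append)
  qed
  then show "x \<in> cyl p l nj e" unfolding cyl_def by simp
qed

lemma words_Suc: "x \<in> words l (Suc m) \<longleftrightarrow> (\<exists>i e. x = i # e \<and> i \<in> {1..l} \<and> e \<in> words l m)"
  unfolding words_def by (cases x) auto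

lemma words_Cons: "i # e \<in> words l (Suc m) \<longleftrightarrow> i \<in> {1..l} \<and> e \<in> words l m"
  unfolding words_def by auto

lemma cylD:
  assumes "M * m \<le> t" "d < p ^ t"
  shows "(\<exists>e'\<in>words l m. Jt t d \<subseteq> cyl p l nj e') \<and>
         (\<forall>e\<in>words l m. \<forall>e'\<in>words l m. Jt t d \<subseteq> cyl p l nj e' \<longrightarrow> e \<noteq> e' \<longrightarrow>
            Jt t d \<inter> cyl p l nj e = {})"
  using assms
proof (induction m arbitrary: t d)
  case 0
  then show ?case by (auto simp: words_def cyl_Nil)
next
  case (Suc m)
  have tM: "M \<le> t" using Suc.prems M_ge1 by simp
  obtain j d' where jin: "j \<in> {1..l}" and d': "d' < p ^ (t - nj j)"
    and lo: "a (j - 1) \<le> real d / real p ^ t" and hi: "(real d + 1) / real p ^ t \<le> a j"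
    and img: "T ` Jt t d = Jt (t - nj j) d'"
    using piece[OF tM Suc.prems(2)] by blast
  have lev: "M * m \<le> t - nj j" using Suc.prems(1) M_ge[OF jin] by simp
  note IH = Suc.IH[OF lev d']
  have JIv: "Jt t d \<subseteq> Iv p nj j" unfolding Jt_def using Iv_sub[OF lo hi] .
  have Jdisj: "Jt t d \<inter> Iv p nj j' = {}" if "j' \<in> {1..l}" "j' \<noteq> j" for j'
    unfolding Jt_def using Iv_disj[OF jin that lo hi] .
  have sub_iff: "Jt t d \<subseteq> cyl p l nj (j # e) \<longleftrightarrow> Jt (t - nj j) d' \<subseteq> cyl p l nj e" for e
    using JIv unfolding cyl_Cons img[symmetric] by auto
  show ?case
  proof (intro conjI ballI impI)
    obtain e where e: "e \<in> words l m" "Jt (t - nj j) d' \<subseteq> cyl p l nj e" using IH by blast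
    then show "\<exists>e'\<in>words l (Suc m). Jt t d \<subseteq> cyl p l nj e'"
      using sub_iff jin by (intro bexI[of _ "j # e"]) (auto simp: words_Cons)
  next
    fix e e' assume e: "e \<in> words l (Suc m)" and e': "e' \<in> words l (Suc m)"
      and sub: "Jt t d \<subseteq> cyl p l nj e'" and ne: "e \<noteq> e'"
    obtain i f where ef: "e = i # f" "i \<in> {1..l}" "f \<in> words l m" using e words_Suc by blast
    obtain i' f' where ef': "e' = i' # f'" "i' \<in> {1..l}" "f' \<in> words l m" using e' words_Suc by blast
    have "Jt t d \<subseteq> Iv p nj i'" using sub ef' cyl_Cons by auto
    then have ij: "i' = j" using Jdisj[of i'] ef' Jt_ne by blast
    show "Jt t d \<inter> cyl p l nj e = {}"
    proof (cases "i = j")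
      case False
      then show ?thesis using Jdisj[of i] ef cyl_Cons by auto
    next
      case True
      then have "f \<noteq> f'" using ne ef ef' ij by simp
      moreover have "Jt (t - nj j) d' \<subseteq> cyl p l nj f'" using sub ef' ij sub_iff by simp
      ultimately have dis: "Jt (t - nj j) d' \<inter> cyl p l nj f = {}" using IH ef ef' by blast
      show ?thesis
      proof (rule ccontr)
        assume "Jt t d \<inter> cyl p l nj e \<noteq> {}"
        then obtain x where "x \<in> Jt t d" "T x \<in> cyl p l nj f" using ef cyl_Cons by auto
        then show False using dis img by blast
      qed
    qed
  qed
qed

end

lemma cell_meas1:
  fixes lo hi :: real
  assumes "lo \<le> hi" "S \<in> sets borel" "{lo<..<hi} \<subseteq> S"
  shows "emeasure lborel ({lo..hi} \<inter> S) = ennreal (hi - lo)"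
proof (rule antisym)
  show "emeasure lborel ({lo..hi} \<inter> S) \<le> ennreal (hi - lo)"
    using emeasure_mono[of "{lo..hi} \<inter> S" "{lo..hi}" lborel] assms(1) by simp
  have "emeasure lborel {lo<..<hi} \<le> emeasure lborel ({lo..hi} \<inter> S)"
    using assms by (intro emeasure_mono) auto
  then show "ennreal (hi - lo) \<le> emeasure lborel ({lo..hi} \<inter> S)" using assms(1) by simp
qed

lemma cell_meas0:
  fixes lo hi :: real
  assumes "{lo<..<hi} \<inter> S = {}"
  shows "emeasure lborel ({lo..hi} \<inter> S) = 0"
proof -
  have sub: "{lo..hi} \<inter> S \<subseteq> {lo, hi}"
  proof
    fix x assume x: "x \<in> {lo..hi} \<inter> S"
    then have "x \<notin> {lo<..<hi}" using assms by blast
    then show "x \<in> {lo, hi}" using x by auto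
  qed
  have fin: "{lo, hi} \<in> sets lborel" by (simp add: borel_closed finite_imp_closed)
  have "emeasure lborel ({lo..hi} \<inter> S) \<le> emeasure lborel {lo, hi}"
    by (rule emeasure_mono[OF sub fin])
  also have "\<dots> = 0" by (rule emeasure_lborel_countable) simp
  finally show ?thesis by simp
qed

lemma mu_cells:
  fixes N :: nat and \<psi> :: "nat \<Rightarrow> complex" and S :: "real set"
  assumes N: "N > 0" and S: "S \<in> sets borel"
    and dich: "\<forall>i\<in>{1..N}. {(real i - 1) / real N <..< real i / real N} \<subseteq> S \<or>
                  {(real i - 1) / real N <..< real i / real N} \<inter> S = {}"
  shows "measure (mu_of N \<psi>) S =
    (\<Sum>i\<in>{i\<in>{1..N}. {(real i - 1) / real N <..< real i / real N} \<subseteq> S}. (cmod (\<psi> i))\<^sup>2)"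
proof -
  define c where "c i = (cmod (\<psi> i))\<^sup>2 * real N" for i
  define g where "g x = (\<Sum>i\<in>{1..N}. c i * indicator (Ecell N i) x)" for x
  have c0: "c i \<ge> 0" for i by (simp add: c_def)
  have mu: "mu_of N \<psi> = density lborel (\<lambda>x. ennreal (g x))"
    unfolding mu_of_def g_def c_def by simp
  have gm: "(\<lambda>x. ennreal (g x)) \<in> borel_measurable lborel"
    unfolding g_def Ecell_def by measurable
  have Ssets: "S \<in> sets lborel" using S by simp
  have Em: "Ecell N i \<inter> S \<in> sets lborel" for i using S unfolding Ecell_def by simp
  define sel where "sel = {i\<in>{1..N}. {(real i - 1) / real N <..< real i / real N} \<subseteq> S}"
  have "emeasure (mu_of N \<psi>) S = (\<integral>\<^sup>+ x. ennreal (g x) * indicator S x \<partial>lborel)"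
    unfolding mu by (rule emeasure_density[OF gm Ssets])
  also have "\<dots> = (\<integral>\<^sup>+ x. (\<Sum>i\<in>{1..N}. ennreal (c i) * indicator (Ecell N i \<inter> S) x) \<partial>lborel)"
  proof (rule nn_integral_cong)
    fix x
    show "ennreal (g x) * indicator S x = (\<Sum>i\<in>{1..N}. ennreal (c i) * indicator (Ecell N i \<inter> S) x)"
    proof (cases "x \<in> S")
      case True
      have "ennreal (g x) = (\<Sum>i\<in>{1..N}. ennreal (c i * indicator (Ecell N i) x))"
        unfolding g_def by (rule sum_ennreal[symmetric]) (simp add: c0)
      also have "\<dots> = (\<Sum>i\<in>{1..N}. ennreal (c i) * indicator (Ecell N i \<inter> S) x)"
      proof (rule sum.cong[OF refl])
        fix i show "ennreal (c i * indicator (Ecell N i) x) = ennreal (c i) * indicator (Ecell N i \<inter> S) x"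
          using True by (cases "x \<in> Ecell N i") simp_all
      qed
      finally show ?thesis using True by simp
    next
      case False
      then show ?thesis by (simp add: indicator_def)
    qed
  qed
  also have "\<dots> = (\<Sum>i\<in>{1..N}. ennreal (c i) * emeasure lborel (Ecell N i \<inter> S))"
  proof -
    note Em[measurable]
    have "(\<integral>\<^sup>+ x. (\<Sum>i\<in>{1..N}. ennreal (c i) * indicator (Ecell N i \<inter> S) x) \<partial>lborel)
        = (\<Sum>i\<in>{1..N}. (\<integral>\<^sup>+ x. ennreal (c i) * indicator (Ecell N i \<inter> S) x \<partial>lborel))"
      by (rule nn_integral_sum) measurable
    also have "\<dots> = (\<Sum>i\<in>{1..N}. ennreal (c i) * emeasure lborel (Ecell N i \<inter> S))"
      by (rule sum.cong[OF refl]) (rule nn_integral_cmult_indicator[OF Em])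
    finally show ?thesis .
  qed
  also have "\<dots> = (\<Sum>i\<in>{1..N}. ennreal (if i \<in> sel then (cmod (\<psi> i))\<^sup>2 else 0))"
  proof (rule sum.cong[OF refl])
    fix i assume i: "i \<in> {1..N}"
    have le: "(real i - 1) / real N \<le> real i / real N" using N by (simp add: divide_right_mono)
    show "ennreal (c i) * emeasure lborel (Ecell N i \<inter> S) = ennreal (if i \<in> sel then (cmod (\<psi> i))\<^sup>2 else 0)"
    proof (cases "i \<in> sel")
      case True
      then have "emeasure lborel (Ecell N i \<inter> S) = ennreal (real i / real N - (real i - 1) / real N)"
        unfolding Ecell_def sel_def by (intro cell_meas1[OF le S]) auto
      also have "real i / real N - (real i - 1) / real N = 1 / real N"
        by (simp add: diff_divide_distrib)
      finally have "ennreal (c i) * emeasure lborel (Ecell N i \<inter> S) = ennreal (c i) * ennreal (1 / real N)"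
        by simp
      also have "\<dots> = ennreal (c i * (1 / real N))"
        by (rule ennreal_mult[symmetric]) (use c0 in auto)
      also have "c i * (1 / real N) = (cmod (\<psi> i))\<^sup>2" using N by (simp add: c_def)
      finally show ?thesis using True by simp
    next
      case False
      then have "{(real i - 1) / real N <..< real i / real N} \<inter> S = {}"
        using dich i unfolding sel_def by auto
      then have "emeasure lborel (Ecell N i \<inter> S) = 0"
        unfolding Ecell_def by (rule cell_meas0)
      then show ?thesis using False by simp
    qed
  qed
  also have "\<dots> = ennreal (\<Sum>i\<in>{1..N}. (if i \<in> sel then (cmod (\<psi> i))\<^sup>2 else 0))"
    by (subst sum_ennreal) auto
  also have "(\<Sum>i\<in>{1..N}. (if i \<in> sel then (cmod (\<psi> i))\<^sup>2 else 0)) = (\<Sum>i\<in>sel. (cmod (\<psi> i))\<^sup>2)"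
    unfolding sel_def by (simp add: sum.If_cases Int_def)
  finally have "emeasure (mu_of N \<psi>) S = ennreal (\<Sum>i\<in>sel. (cmod (\<psi> i))\<^sup>2)" .
  then show ?thesis unfolding measure_def sel_def by (simp add: sum_nonneg)
qed

context wm begin

lemma in01: "(\<exists>j\<in>{1..l}. a (j - 1) \<le> x \<and> x < a j) \<longleftrightarrow> (0 \<le> x \<and> x < 1)"
proof
  assume "\<exists>j\<in>{1..l}. a (j - 1) \<le> x \<and> x < a j"
  then obtain j where j: "j \<in> {1..l}" "a (j - 1) \<le> x" "x < a j" by blast
  have "a 0 \<le> a (j - 1)" "a j \<le> a l" using j by (auto intro: a_mono)
  then show "0 \<le> x \<and> x < 1" using j a0 al by simp
next
  assume x: "0 \<le> x \<and> x < 1"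
  define j where "j = (LEAST j. x < a j)"
  have xl: "x < a l" using x al by simp
  have jl: "j \<le> l" unfolding j_def using xl by (rule Least_le)
  have xj: "x < a j" unfolding j_def using xl by (rule LeastI)
  have j0: "j \<noteq> 0"
  proof
    assume "j = 0" then show False using xj x a0 by simp
  qed
  have "\<not> x < a (j - 1)" unfolding j_def
    by (rule not_less_Least) (use j0 in \<open>simp add: j_def[symmetric]\<close>)
  then show "\<exists>j\<in>{1..l}. a (j - 1) \<le> x \<and> x < a j" using j0 jl xj by (intro bexI[of _ j]) auto
qed

lemma piece_uniq:
  assumes "j \<in> {1..l}" "a (j - 1) \<le> x" "x < a j" "j' \<in> {1..l}" "a (j' - 1) \<le> x" "x < a j'"
  shows "j' = j"
proof (rule ccontr)
  assume "j' \<noteq> j"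
  then consider "j' < j" | "j < j'" by linarith
  then show False
  proof cases
    case 1 then have "a j' \<le> a (j - 1)" by (intro a_mono) auto
    then show ?thesis using assms by linarith
  next
    case 2 then have "a j \<le> a (j' - 1)" by (intro a_mono) auto
    then show ?thesis using assms by linarith
  qed
qed

lemma T_sum: "T x = (\<Sum>j\<in>{1..l}. indicator {a (j - 1)..<a j} x * (real p ^ nj j * (x - a (j - 1))))
                   + indicator (- {0..<1}) x"
proof (cases "0 \<le> x \<and> x < 1")
  case True
  then obtain j where j: "j \<in> {1..l}" "a (j - 1) \<le> x" "x < a j" using in01 by blast
  have "(\<Sum>j\<in>{1..l}. indicator {a (j - 1)..<a j} x * (real p ^ nj j * (x - a (j - 1))))
      = (\<Sum>j'\<in>{1..l}. if j' = j then real p ^ nj j * (x - a (j - 1)) else 0)"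
  proof (rule sum.cong[OF refl])
    fix j' assume j': "j' \<in> {1..l}"
    show "indicator {a (j' - 1)..<a j'} x * (real p ^ nj j' * (x - a (j' - 1))) =
          (if j' = j then real p ^ nj j * (x - a (j - 1)) else 0)"
    proof (cases "j' = j")
      case True then show ?thesis using j by simp
    next
      case False
      then have "x \<notin> {a (j' - 1)..<a j'}" using piece_uniq[OF j j'] by auto
      then show ?thesis using False by simp
    qed
  qed
  also have "\<dots> = real p ^ nj j * (x - a (j - 1))" using j(1) by simp
  finally show ?thesis using Tp_piece[OF j] True by simp
next
  case False
  then have "\<not> (\<exists>j\<in>{1..l}. a (j - 1) \<le> x \<and> x < a j)" using in01 by blast
  then have "T x = 1" unfolding Tp_def by (rule if_not_P)
  moreover have "(\<Sum>j\<in>{1..l}. indicator {a (j - 1)..<a j} x * (real p ^ nj j * (x - a (j - 1)))) = 0"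
  proof (rule sum.neutral, rule ballI)
    fix j assume "j \<in> {1..l}"
    then have "x \<notin> {a (j - 1)..<a j}" using \<open>\<not> (\<exists>j\<in>{1..l}. _)\<close> by auto
    then show "indicator {a (j - 1)..<a j} x * (real p ^ nj j * (x - a (j - 1))) = 0" by simp
  qed
  ultimately show ?thesis using False by (simp add: indicator_def)
qed

lemma T_meas: "T \<in> borel_measurable borel"
proof -
  have "T = (\<lambda>x. (\<Sum>j\<in>{1..l}. indicator {a (j - 1)..<a j} x * (real p ^ nj j * (x - a (j - 1))))
                   + indicator (- {0..<1}) x)"
    using T_sum by (rule ext)
  also have "\<dots> \<in> borel_measurable borel" by measurable
  finally show ?thesis .
qed

lemma cyl_meas: "cyl p l nj e \<in> sets borel"
  unfolding cyl_def
proof (rule sets.countable_INT'')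
  fix i
  show "(T ^^ i) -` Iv p nj (e ! i) \<in> sets borel"
    by (rule measurable_sets_borel[OF measurable_compose_n[OF T_meas]]) (simp add: Iv_def)
qed auto

end

lemma norm_pres:
  fixes U :: "nat \<Rightarrow> nat \<Rightarrow> complex" and \<phi> :: "nat \<Rightarrow> complex"
  assumes orth: "\<forall>i\<in>{1..N}. \<forall>j\<in>{1..N}. (\<Sum>k\<in>{1..N}. cnj (U k i) * U k j) = (if i = j then 1 else 0)"
  shows "(\<Sum>i\<in>{1..N}. (cmod (\<Sum>c\<in>{1..N}. U i c * \<phi> c))\<^sup>2) = (\<Sum>c\<in>{1..N}. (cmod (\<phi> c))\<^sup>2)"
proof -
  have "complex_of_real (\<Sum>i\<in>{1..N}. (cmod (\<Sum>c\<in>{1..N}. U i c * \<phi> c))\<^sup>2)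
      = (\<Sum>i\<in>{1..N}. (\<Sum>c\<in>{1..N}. U i c * \<phi> c) * cnj (\<Sum>d\<in>{1..N}. U i d * \<phi> d))"
    by (simp only: of_real_sum complex_norm_square)
  also have "\<dots> = (\<Sum>i\<in>{1..N}. \<Sum>c\<in>{1..N}. \<Sum>d\<in>{1..N}. (U i c * \<phi> c) * (cnj (U i d) * cnj (\<phi> d)))"
    by (simp add: sum_product)
  also have "\<dots> = (\<Sum>c\<in>{1..N}. \<Sum>d\<in>{1..N}. \<Sum>i\<in>{1..N}. (U i c * \<phi> c) * (cnj (U i d) * cnj (\<phi> d)))"
    by (subst sum.swap) (subst (2) sum.swap, rule refl)
  also have "\<dots> = (\<Sum>c\<in>{1..N}. \<Sum>d\<in>{1..N}. \<phi> c * cnj (\<phi> d) * (\<Sum>i\<in>{1..N}. cnj (U i d) * U i c))"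
    by (simp add: sum_distrib_left mult_ac)
  also have "\<dots> = (\<Sum>c\<in>{1..N}. \<Sum>d\<in>{1..N}. \<phi> c * cnj (\<phi> d) * (if d = c then 1 else 0))"
    using orth by (intro sum.cong refl) simp
  also have "\<dots> = (\<Sum>c\<in>{1..N}. \<phi> c * cnj (\<phi> c))"
    by (simp add: if_distrib sum.delta cong: if_cong)
  also have "\<dots> = complex_of_real (\<Sum>c\<in>{1..N}. (cmod (\<phi> c))\<^sup>2)"
    by (simp only: of_real_sum complex_norm_square)
  finally show ?thesis by (simp only: of_real_eq_iff)
qed

locale wmq = wm +
  fixes k :: nat and U :: "nat \<Rightarrow> nat \<Rightarrow> complex" and \<psi> :: "nat \<Rightarrow> complex"
  assumes quant: "is_quantization p l nj (p ^ k) U"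
    and eig: "is_normalized_eigenvector (p ^ k) U \<psi>"
begin

abbreviation "N \<equiv> p ^ k"
abbreviation "\<mu> \<equiv> mu_of (p ^ k) \<psi>"
abbreviation "F e \<equiv> measure \<mu> (cyl p l nj e)"
abbreviation "w i \<equiv> (cmod (\<psi> i))\<^sup>2"
definition "C e = {i\<in>{1..N}. Jt k (i - 1) \<subseteq> cyl p l nj e}"

lemma Npos: "N > 0" using p2 by simp

lemma cell_eq: "i \<ge> 1 \<Longrightarrow> {(real i - 1) / real N <..< real i / real N} = Jt k (i - 1)"
  unfolding Jt_def by (simp add: of_nat_diff)

lemma cell_lt: "i \<in> {1..N} \<Longrightarrow> i - 1 < p ^ k" by auto

lemma uniqD:
  assumes "M * m \<le> t" "d < p ^ t" "e \<in> words l m" "e' \<in> words l m"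
    "Jt t d \<subseteq> cyl p l nj e" "Jt t d \<subseteq> cyl p l nj e'"
  shows "e = e'"
  using cylD[OF assms(1,2)] assms(3-6) Jt_ne[of t d] by blast

lemma F_cells:
  assumes e: "e \<in> words l m" and lev: "M * m \<le> k"
  shows "F e = (\<Sum>i\<in>C e. w i)"
proof -
  have "F e = (\<Sum>i\<in>{i\<in>{1..N}. {(real i - 1) / real N <..< real i / real N} \<subseteq> cyl p l nj e}. w i)"
  proof (rule mu_cells[OF Npos cyl_meas], rule ballI)
    fix i assume i: "i \<in> {1..N}"
    have D: "(\<exists>e'\<in>words l m. Jt k (i - 1) \<subseteq> cyl p l nj e') \<and>
         (\<forall>e\<in>words l m. \<forall>e'\<in>words l m. Jt k (i - 1) \<subseteq> cyl p l nj e' \<longrightarrow> e \<noteq> e' \<longrightarrow>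
            Jt k (i - 1) \<inter> cyl p l nj e = {})"
      using cylD[OF lev cell_lt[OF i]] .
    then show "{(real i - 1) / real N <..< real i / real N} \<subseteq> cyl p l nj e \<or>
          {(real i - 1) / real N <..< real i / real N} \<inter> cyl p l nj e = {}"
    proof -
      obtain e' where e': "e' \<in> words l m" "Jt k (i - 1) \<subseteq> cyl p l nj e'" using D by blast
      have "Jt k (i - 1) \<subseteq> cyl p l nj e \<or> Jt k (i - 1) \<inter> cyl p l nj e = {}"
      proof (cases "e = e'")
        case True then show ?thesis using e' by simp
      next
        case False then show ?thesis using D e e' by blast
      qed
      then show ?thesis using cell_eq[of i] i by simp
    qed
  qed
  also have "{i\<in>{1..N}. {(real i - 1) / real N <..< real i / real N} \<subseteq> cyl p l nj e} = C e"
    unfolding C_def using cell_eq by auto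
  finally show ?thesis .
qed

lemma F_Nil: "F [] = 1"
proof -
  have "F [] = (\<Sum>i\<in>C []. w i)" by (rule F_cells[of _ 0]) (auto simp: words_def)
  also have "C [] = {1..N}" by (auto simp: C_def cyl_Nil)
  also have "(\<Sum>i\<in>{1..N}. w i) = 1" using eig unfolding is_normalized_eigenvector_def by simp
  finally show ?thesis .
qed

lemma words_snoc: "e \<in> words l m \<Longrightarrow> j \<in> {1..l} \<Longrightarrow> e @ [j] \<in> words l (Suc m)"
  unfolding words_def by auto

lemma F_snoc:
  assumes e: "e \<in> words l m" and lev: "M * Suc m \<le> k"
  shows "(\<Sum>j\<in>{1..l}. F (e @ [j])) = F e"
proof -
  have lev0: "M * m \<le> k" using lev by simp
  have CU: "C e = (\<Union>j\<in>{1..l}. C (e @ [j]))"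
  proof
    show "(\<Union>j\<in>{1..l}. C (e @ [j])) \<subseteq> C e" using cyl_snoc unfolding C_def by blast
    show "C e \<subseteq> (\<Union>j\<in>{1..l}. C (e @ [j]))"
    proof
      fix i assume i: "i \<in> C e"
      then have iN: "i \<in> {1..N}" and sub: "Jt k (i - 1) \<subseteq> cyl p l nj e" unfolding C_def by auto
      obtain e'' where e'': "e'' \<in> words l (Suc m)" "Jt k (i - 1) \<subseteq> cyl p l nj e''"
        using cylD[OF lev cell_lt[OF iN]] by blast
      have ne: "e'' \<noteq> []" using e'' by (auto simp: words_def)
      have split: "e'' = butlast e'' @ [last e'']" using ne by simp
      have bw: "butlast e'' \<in> words l m" using e'' by (auto simp: words_def dest: in_set_butlastD)
      have lw: "last e'' \<in> {1..l}" using e'' last_in_set[OF ne] unfolding words_def by blast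
      have "Jt k (i - 1) \<subseteq> cyl p l nj (butlast e'')"
        using e''(2) cyl_snoc[of "butlast e''" "last e''"] split by auto
      then have "butlast e'' = e" using uniqD[OF lev0 cell_lt[OF iN] bw e] sub by blast
      then have "i \<in> C (e @ [last e''])" using e''(2) split iN unfolding C_def by auto
      then show "i \<in> (\<Union>j\<in>{1..l}. C (e @ [j]))" using lw by blast
    qed
  qed
  have disj: "C (e @ [j]) \<inter> C (e @ [j']) = {}" if "j \<in> {1..l}" "j' \<in> {1..l}" "j \<noteq> j'" for j j'
  proof (rule ccontr)
    assume "C (e @ [j]) \<inter> C (e @ [j']) \<noteq> {}"
    then obtain i where "i \<in> {1..N}" "Jt k (i - 1) \<subseteq> cyl p l nj (e @ [j])" "Jt k (i - 1) \<subseteq> cyl p l nj (e @ [j'])"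
      unfolding C_def by auto
    then have "e @ [j] = e @ [j']" using uniqD[OF lev cell_lt] words_snoc[OF e] that by blast
    then show False using that by simp
  qed
  have "F e = (\<Sum>i\<in>C e. w i)" by (rule F_cells[OF e lev0])
  also have "\<dots> = (\<Sum>j\<in>{1..l}. \<Sum>i\<in>C (e @ [j]). w i)"
  proof -
    have fin: "finite (C x)" for x unfolding C_def by simp
    show ?thesis unfolding CU by (rule sum.UNION_disjoint) (use fin disj in auto)
  qed
  also have "\<dots> = (\<Sum>j\<in>{1..l}. F (e @ [j]))"
    using F_cells[OF words_snoc[OF e] lev] by simp
  finally show ?thesis by simp
qed

end

context wmq begin

lemma blk:
  assumes c: "c \<in> {1..N}" and kM: "M \<le> k"
  obtains j d' where "j \<in> {1..l}" "d' < p ^ (k - nj j)" "Jt k (c - 1) \<subseteq> Iv p nj j"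
    "T ` Jt k (c - 1) = Jt (k - nj j) d'"
proof -
  obtain j d' where j: "j \<in> {1..l}" "d' < p ^ (k - nj j)"
    "a (j - 1) \<le> real (c - 1) / real p ^ k" "(real (c - 1) + 1) / real p ^ k \<le> a j"
    "T ` Jt k (c - 1) = Jt (k - nj j) d'"
    using piece[OF kM cell_lt[OF c]] by blast
  have "Jt k (c - 1) \<subseteq> Iv p nj j" unfolding Jt_def by (rule Iv_sub[OF j(3,4)])
  then show ?thesis using that j by blast
qed

lemma supp:
  assumes i: "i \<in> {1..N}" and c: "c \<in> {1..N}" and kM: "M \<le> k" and U0: "U i c \<noteq> 0"
  shows "Jt k (i - 1) \<inter> T ` Jt k (c - 1) \<noteq> {}"
proof
  assume dis: "Jt k (i - 1) \<inter> T ` Jt k (c - 1) = {}"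
  obtain j d' where j: "j \<in> {1..l}" "T ` Jt k (c - 1) = Jt (k - nj j) d'"
    using blk[OF c kM] by metis
  have Bm: "Bmat p l nj N c i = (cmod (U i c))\<^sup>2"
    using quant i c unfolding is_quantization_def by blast
  have pos: "Bmat p l nj N c i \<noteq> 0" using Bm U0 by simp
  define lo where "lo = (real c - 1) / real N"
  define hi where "hi = real c / real N"
  have lohi: "lo < hi" unfolding lo_def hi_def using Npos by (simp add: divide_strict_right_mono)
  have celli: "closure (Jt k (i - 1)) = Ecell N i"
  proof -
    have "(real i - 1) / real N < real i / real N" using Npos by (simp add: divide_strict_right_mono)
    moreover have "Jt k (i - 1) = {(real i - 1) / real N <..< real i / real N}"
      using cell_eq[of i] i by simp
    ultimately show ?thesis unfolding Ecell_def by (simp only: closure_greaterThanLessThan)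
  qed
  have opn: "open (T ` Jt k (c - 1))" using j Jt_open by simp
  have dis2: "T ` Jt k (c - 1) \<inter> Ecell N i = {}"
    using open_Int_closure_eq_empty[OF opn, of "Jt k (i - 1)"] dis celli by blast
  have sub: "Ecell N c \<inter> {x. T x \<in> Ecell N i} \<subseteq> {lo, hi}"
  proof
    fix x assume x: "x \<in> Ecell N c \<inter> {x. T x \<in> Ecell N i}"
    show "x \<in> {lo, hi}"
    proof (rule ccontr)
      assume "x \<notin> {lo, hi}"
      then have "x \<in> {lo<..<hi}" using x unfolding Ecell_def lo_def hi_def by auto
      moreover have "{lo<..<hi} = Jt k (c - 1)" using cell_eq[of c] c unfolding lo_def hi_def by simp
      ultimately have "x \<in> Jt k (c - 1)" by blast
      then have "T x \<in> T ` Jt k (c - 1)" by blast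
      then show False using x dis2 by blast
    qed
  qed
  have "{lo, hi} \<in> null_sets (completion lborel)"
    using null_sets_completion_iff[of "{lo, hi}" lborel] finite_imp_null_set_lborel[of "{lo, hi}"]
    by (simp add: borel_closed finite_imp_closed)
  then have "Ecell N c \<inter> {x. T x \<in> Ecell N i} \<in> null_sets lebesgue"
    by (rule null_sets_completion_subset[OF sub])
  then have "measure lebesgue (Ecell N c \<inter> {x. T x \<in> Ecell N i}) = 0"
    by (rule measure_eq_0_null_sets)
  then have "Bmat p l nj N c i = 0" unfolding Bmat_def by simp
  then show False using pos by simp
qed

end

context wm begin

lemma cylD_ex:
  assumes "M * m \<le> t" "d < p ^ t"
  obtains e' where "e' \<in> words l m" "Jt t d \<subseteq> cyl p l nj e'"
  using conjunct1[OF cylD[OF assms]] by blast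

lemma cylD_dis:
  assumes "M * m \<le> t" "d < p ^ t" "e \<in> words l m" "e' \<in> words l m"
    "Jt t d \<subseteq> cyl p l nj e'" "e \<noteq> e'"
  shows "Jt t d \<inter> cyl p l nj e = {}"
  using conjunct2[OF cylD[OF assms(1,2)]] assms(3-6) by blast

end

context wmq begin

lemma F_cons:
  assumes e: "e \<in> words l m" and lev: "M * Suc m \<le> k"
  shows "(\<Sum>j\<in>{1..l}. F (j # e)) = F e"
proof -
  have lev0: "M * m \<le> k" using lev by simp
  have kM: "M \<le> k" using lev by simp
  define B where "B = {c\<in>{1..N}. T ` Jt k (c - 1) \<subseteq> cyl p l nj e}"
  have BU: "B = (\<Union>j\<in>{1..l}. C (j # e))"
  proof
    show "(\<Union>j\<in>{1..l}. C (j # e)) \<subseteq> B"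
      unfolding B_def C_def cyl_Cons by blast
    show "B \<subseteq> (\<Union>j\<in>{1..l}. C (j # e))"
    proof
      fix c assume "c \<in> B"
      then have c: "c \<in> {1..N}" and sub: "T ` Jt k (c - 1) \<subseteq> cyl p l nj e" unfolding B_def by auto
      obtain j where j: "j \<in> {1..l}" "Jt k (c - 1) \<subseteq> Iv p nj j" using blk[OF c kM] by metis
      have "c \<in> C (j # e)" unfolding C_def cyl_Cons using c j sub by blast
      then show "c \<in> (\<Union>j\<in>{1..l}. C (j # e))" using j by blast
    qed
  qed
  have disj: "C (j # e) \<inter> C (j' # e) = {}" if "j \<in> {1..l}" "j' \<in> {1..l}" "j \<noteq> j'" for j j'
  proof (rule ccontr)
    assume "C (j # e) \<inter> C (j' # e) \<noteq> {}"
    then obtain i where "i \<in> {1..N}" "Jt k (i - 1) \<subseteq> cyl p l nj (j # e)" "Jt k (i - 1) \<subseteq> cyl p l nj (j' # e)"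
      unfolding C_def by auto
    moreover have "j # e \<in> words l (Suc m)" "j' # e \<in> words l (Suc m)" using e that by (simp_all add: words_Cons)
    ultimately have "j # e = j' # e" using uniqD[OF lev cell_lt] by blast
    then show False using that by simp
  qed
  have fin: "finite (C x)" for x unfolding C_def by simp
  have sumB: "(\<Sum>j\<in>{1..l}. F (j # e)) = (\<Sum>c\<in>B. w c)"
  proof -
    have "(\<Sum>j\<in>{1..l}. F (j # e)) = (\<Sum>j\<in>{1..l}. \<Sum>i\<in>C (j # e). w i)"
      using F_cells[OF _ lev] e by (intro sum.cong refl) (simp add: words_Cons)
    also have "\<dots> = (\<Sum>c\<in>B. w c)"
      unfolding BU by (rule sum.UNION_disjoint[symmetric]) (use fin disj in auto)
    finally show ?thesis .
  qed
  have alpha: "i \<in> C e" if c: "c \<in> B" and i: "i \<in> {1..N}" and U0: "U i c \<noteq> 0" for i c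
  proof -
    have cN: "c \<in> {1..N}" and cs: "T ` Jt k (c - 1) \<subseteq> cyl p l nj e" using c unfolding B_def by auto
    have meet: "Jt k (i - 1) \<inter> T ` Jt k (c - 1) \<noteq> {}" using supp[OF i cN kM U0] .
    obtain ei where ei: "ei \<in> words l m" "Jt k (i - 1) \<subseteq> cyl p l nj ei"
      by (rule cylD_ex[OF lev0 cell_lt[OF i]])
    have "ei = e"
    proof (rule ccontr)
      assume "ei \<noteq> e"
      then have "Jt k (i - 1) \<inter> cyl p l nj e = {}" using cylD_dis[OF lev0 cell_lt[OF i] e ei(1) ei(2)] by simp
      then show False using meet cs by blast
    qed
    then show ?thesis using ei i unfolding C_def by simp
  qed
  have beta: "U i c = 0" if c: "c \<in> {1..N}" "c \<notin> B" and i: "i \<in> C e" for i c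
  proof (rule ccontr)
    assume U0: "U i c \<noteq> 0"
    have iN: "i \<in> {1..N}" and isub: "Jt k (i - 1) \<subseteq> cyl p l nj e" using i unfolding C_def by auto
    have meet: "Jt k (i - 1) \<inter> T ` Jt k (c - 1) \<noteq> {}" using supp[OF iN c(1) kM U0] .
    obtain j d' where j: "j \<in> {1..l}" "d' < p ^ (k - nj j)" "T ` Jt k (c - 1) = Jt (k - nj j) d'"
      using blk[OF c(1) kM] by metis
    have lev1: "M * m \<le> k - nj j" using lev M_ge[OF j(1)] by simp
    obtain d where d: "d \<in> words l m" "Jt (k - nj j) d' \<subseteq> cyl p l nj d"
      by (rule cylD_ex[OF lev1 j(2)])
    have "d \<noteq> e" using c d j(3) unfolding B_def by auto
    then have "Jt (k - nj j) d' \<inter> cyl p l nj e = {}" using cylD_dis[OF lev1 j(2) e d(1) d(2)] by simp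
    then show False using meet isub j(3) by blast
  qed
  obtain c0 where ev: "\<forall>i\<in>{1..N}. (\<Sum>j\<in>{1..N}. U i j * \<psi> j) = c0 * \<psi> i"
    using eig unfolding is_normalized_eigenvector_def by blast
  have wsum: "(\<Sum>i\<in>{1..N}. w i) = 1" using eig unfolding is_normalized_eigenvector_def by simp
  have orth: "\<forall>i\<in>{1..N}. \<forall>j\<in>{1..N}. (\<Sum>k\<in>{1..N}. cnj (U k i) * U k j) = (if i = j then 1 else 0)"
    using quant unfolding is_quantization_def by blast
  have "(\<Sum>i\<in>{1..N}. (cmod (\<Sum>c\<in>{1..N}. U i c * \<psi> c))\<^sup>2) = (\<Sum>c\<in>{1..N}. w c)"
    by (rule norm_pres[OF orth])
  also have "(\<Sum>i\<in>{1..N}. (cmod (\<Sum>c\<in>{1..N}. U i c * \<psi> c))\<^sup>2) = (\<Sum>i\<in>{1..N}. (cmod c0)\<^sup>2 * w i)"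
    using ev by (intro sum.cong refl) (simp add: norm_mult power_mult_distrib)
  finally have "(cmod c0)\<^sup>2 * 1 = 1" using wsum by (simp add: sum_distrib_left[symmetric])
  then have c01: "(cmod c0)\<^sup>2 = 1" by simp
  define \<phi> where "\<phi> c = (if c \<in> B then \<psi> c else 0)" for c
  have A1: "(\<Sum>c\<in>{1..N}. U i c * \<psi> c) = (\<Sum>c\<in>{1..N}. U i c * \<phi> c)" if i: "i \<in> C e" for i
  proof (rule sum.cong[OF refl])
    fix c assume c: "c \<in> {1..N}"
    show "U i c * \<psi> c = U i c * \<phi> c"
      using beta[OF c _ i] by (cases "c \<in> B") (simp_all add: \<phi>_def)
  qed
  have A2: "(\<Sum>c\<in>{1..N}. U i c * \<phi> c) = 0" if i: "i \<in> {1..N}" "i \<notin> C e" for i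
  proof (rule sum.neutral, rule ballI)
    fix c assume c: "c \<in> {1..N}"
    show "U i c * \<phi> c = 0"
      using alpha[OF _ i(1)] i(2) by (cases "c \<in> B") (auto simp: \<phi>_def)
  qed
  have CeN: "C e \<subseteq> {1..N}" unfolding C_def by auto
  have "F e = (\<Sum>i\<in>C e. w i)" by (rule F_cells[OF e lev0])
  also have "\<dots> = (\<Sum>i\<in>C e. (cmod (\<Sum>c\<in>{1..N}. U i c * \<psi> c))\<^sup>2)"
  proof (rule sum.cong[OF refl])
    fix i assume "i \<in> C e"
    then have "i \<in> {1..N}" using CeN by auto
    then have "(\<Sum>c\<in>{1..N}. U i c * \<psi> c) = c0 * \<psi> i" using ev by blast
    then show "w i = (cmod (\<Sum>c\<in>{1..N}. U i c * \<psi> c))\<^sup>2"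
      using c01 by (simp add: norm_mult power_mult_distrib)
  qed
  also have "\<dots> = (\<Sum>i\<in>C e. (cmod (\<Sum>c\<in>{1..N}. U i c * \<phi> c))\<^sup>2)"
    using A1 by simp
  also have "\<dots> = (\<Sum>i\<in>{1..N}. (cmod (\<Sum>c\<in>{1..N}. U i c * \<phi> c))\<^sup>2)"
    by (rule sum.mono_neutral_left) (use CeN A2 in auto)
  also have "\<dots> = (\<Sum>c\<in>{1..N}. (cmod (\<phi> c))\<^sup>2)"
    by (rule norm_pres[OF orth])
  also have "\<dots> = (\<Sum>c\<in>B. w c)"
  proof -
    have BN: "B \<subseteq> {1..N}" unfolding B_def by auto
    have "(\<Sum>c\<in>{1..N}. (cmod (\<phi> c))\<^sup>2) = (\<Sum>c\<in>B. (cmod (\<phi> c))\<^sup>2)"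
      by (rule sum.mono_neutral_right) (use BN in \<open>auto simp: \<phi>_def\<close>)
    also have "\<dots> = (\<Sum>c\<in>B. w c)" by (simp add: \<phi>_def)
    finally show ?thesis .
  qed
  finally show ?thesis using sumB by simp
qed

end

lemma finite_words: "finite (words l n)"
proof -
  have "words l n \<subseteq> {xs. set xs \<subseteq> {1..l} \<and> length xs = n}" unfolding words_def by auto
  then show ?thesis using finite_lists_length_eq[of "{1..l}" n] finite_subset by auto
qed

lemma words_img_Suc: "words l (Suc a) = (\<lambda>(j, e). j # e) ` ({1..l} \<times> words l a)"
proof
  show "words l (Suc a) \<subseteq> (\<lambda>(j, e). j # e) ` ({1..l} \<times> words l a)"
  proof
    fix x assume "x \<in> words l (Suc a)"
    then obtain i e where "x = i # e" "i \<in> {1..l}" "e \<in> words l a"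
      unfolding words_def by (cases x) auto
    then show "x \<in> (\<lambda>(j, e). j # e) ` ({1..l} \<times> words l a)" by force
  qed
  show "(\<lambda>(j, e). j # e) ` ({1..l} \<times> words l a) \<subseteq> words l (Suc a)"
    unfolding words_def by auto
qed

lemma sum_words_Suc: "(\<Sum>x\<in>words l (Suc a). f x) = (\<Sum>j\<in>{1..l}. \<Sum>e\<in>words l a. f (j # e))"
proof -
  have inj: "inj_on (\<lambda>(j, e). j # e) ({1..l} \<times> words l a)" by (auto simp: inj_on_def)
  have "(\<Sum>x\<in>words l (Suc a). f x) = (\<Sum>(j, e)\<in>{1..l} \<times> words l a. f (j # e))"
    unfolding words_img_Suc by (subst sum.reindex[OF inj]) (simp add: case_prod_unfold)
  also have "\<dots> = (\<Sum>j\<in>{1..l}. \<Sum>e\<in>words l a. f (j # e))"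
    by (rule sum.cartesian_product[symmetric])
  finally show ?thesis .
qed

lemma words_img_snoc: "words l (Suc a) = (\<lambda>(e, j). e @ [j]) ` (words l a \<times> {1..l})"
proof
  show "words l (Suc a) \<subseteq> (\<lambda>(e, j). e @ [j]) ` (words l a \<times> {1..l})"
  proof
    fix x assume x: "x \<in> words l (Suc a)"
    then have ne: "x \<noteq> []" unfolding words_def by auto
    have "x = butlast x @ [last x]" using ne by simp
    moreover have "butlast x \<in> words l a" using x unfolding words_def by (auto dest: in_set_butlastD)
    moreover have "last x \<in> {1..l}" using x last_in_set[OF ne] unfolding words_def by blast
    ultimately show "x \<in> (\<lambda>(e, j). e @ [j]) ` (words l a \<times> {1..l})" by force
  qed
  show "(\<lambda>(e, j). e @ [j]) ` (words l a \<times> {1..l}) \<subseteq> words l (Suc a)"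
    unfolding words_def by auto
qed

lemma sum_words_snoc: "(\<Sum>x\<in>words l (Suc a). f x) = (\<Sum>e\<in>words l a. \<Sum>j\<in>{1..l}. f (e @ [j]))"
proof -
  have inj: "inj_on (\<lambda>(e, j). e @ [j]) (words l a \<times> {1..l})" by (auto simp: inj_on_def)
  have "(\<Sum>x\<in>words l (Suc a). f x) = (\<Sum>(e, j)\<in>words l a \<times> {1..l}. f (e @ [j]))"
    unfolding words_img_snoc by (subst sum.reindex[OF inj]) (simp add: case_prod_unfold)
  also have "\<dots> = (\<Sum>e\<in>words l a. \<Sum>j\<in>{1..l}. f (e @ [j]))"
    by (rule sum.cartesian_product[symmetric])
  finally show ?thesis .
qed

lemma words_img_app: "words l (a + b) = (\<lambda>(e, e'). e @ e') ` (words l a \<times> words l b)"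
proof
  show "words l (a + b) \<subseteq> (\<lambda>(e, e'). e @ e') ` (words l a \<times> words l b)"
  proof
    fix x assume x: "x \<in> words l (a + b)"
    have w: "(take a x, drop a x) \<in> words l a \<times> words l b"
      using x unfolding words_def by (auto dest: in_set_takeD in_set_dropD)
    show "x \<in> (\<lambda>(e, e'). e @ e') ` (words l a \<times> words l b)"
    proof (rule image_eqI[where x = "(take a x, drop a x)"])
      show "x = (\<lambda>(e, e'). e @ e') (take a x, drop a x)" by simp
    qed (rule w)
  qed
  show "(\<lambda>(e, e'). e @ e') ` (words l a \<times> words l b) \<subseteq> words l (a + b)"
  proof (rule image_subsetI)
    fix z assume "z \<in> words l a \<times> words l b"
    then show "(\<lambda>(e, e'). e @ e') z \<in> words l (a + b)" by (cases z) (simp add: words_def)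
  qed
qed

lemma sum_words_app: "(\<Sum>x\<in>words l (a + b). f x) = (\<Sum>e\<in>words l a. \<Sum>e'\<in>words l b. f (e @ e'))"
proof -
  have inj: "inj_on (\<lambda>(e, e'). e @ e') (words l a \<times> words l b)"
    by (auto simp: inj_on_def words_def)
  have "(\<Sum>x\<in>words l (a + b). f x) = (\<Sum>(e, e')\<in>words l a \<times> words l b. f (e @ e'))"
    unfolding words_img_app by (subst sum.reindex[OF inj]) (simp add: case_prod_unfold)
  also have "\<dots> = (\<Sum>e\<in>words l a. \<Sum>e'\<in>words l b. f (e @ e'))"
    by (rule sum.cartesian_product[symmetric])
  finally show ?thesis .
qed

lemma vw_Nil: "vw p nj [] = 1" by (simp add: vw_def)

lemma vw_Cons: "vw p nj (j # x) = (real p ^ nj j) powr (-1/2) * vw p nj x"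
  unfolding vw_def by (simp only: length_Cons prod.lessThan_Suc_shift nth_Cons_0 nth_Cons_Suc)

lemma vw_app: "vw p nj (x @ y) = vw p nj x * vw p nj y"
  by (induction x) (simp_all add: vw_Nil vw_Cons)

lemma vw_pos: "p > 0 \<Longrightarrow> vw p nj x > 0"
  unfolding vw_def by (intro prod_pos) simp

context wmq begin

lemma F_nonneg: "F e \<ge> 0" by simp

lemma cons_sum:
  assumes e': "e' \<in> words l nb" and lev: "M * (na + nb) \<le> k"
  shows "(\<Sum>e\<in>words l na. F (e @ e')) = F e'"
  using lev
proof (induction na)
  case 0
  have "words l 0 = {[]}" by (auto simp: words_def)
  then show ?case by simp
next
  case (Suc na)
  have "(\<Sum>x\<in>words l (Suc na). F (x @ e')) = (\<Sum>j\<in>{1..l}. \<Sum>e\<in>words l na. F (j # (e @ e')))"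
    by (simp add: sum_words_Suc)
  also have "\<dots> = (\<Sum>e\<in>words l na. \<Sum>j\<in>{1..l}. F (j # (e @ e')))"
    by (rule sum.swap)
  also have "\<dots> = (\<Sum>e\<in>words l na. F (e @ e'))"
  proof (rule sum.cong[OF refl])
    fix e assume e: "e \<in> words l na"
    have "e @ e' \<in> words l (na + nb)" using e e' unfolding words_def by auto
    moreover have "M * Suc (na + nb) \<le> k" using Suc.prems by simp
    ultimately show "(\<Sum>j\<in>{1..l}. F (j # (e @ e'))) = F (e @ e')" by (rule F_cons)
  qed
  also have "\<dots> = F e'" using Suc.prems by (intro Suc.IH) simp
  finally show ?case .
qed

lemma snoc_sum:
  assumes e: "e \<in> words l na" and lev: "M * (na + nb) \<le> k"
  shows "(\<Sum>e'\<in>words l nb. F (e @ e')) = F e"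
  using lev
proof (induction nb)
  case 0
  have "words l 0 = {[]}" by (auto simp: words_def)
  then show ?case by simp
next
  case (Suc nb)
  have "(\<Sum>x\<in>words l (Suc nb). F (e @ x)) = (\<Sum>e'\<in>words l nb. \<Sum>j\<in>{1..l}. F ((e @ e') @ [j]))"
    by (simp add: sum_words_snoc)
  also have "\<dots> = (\<Sum>e'\<in>words l nb. F (e @ e'))"
  proof (rule sum.cong[OF refl])
    fix e' assume e': "e' \<in> words l nb"
    have "e @ e' \<in> words l (na + nb)" using e e' unfolding words_def by auto
    moreover have "M * Suc (na + nb) \<le> k" using Suc.prems by simp
    ultimately show "(\<Sum>j\<in>{1..l}. F ((e @ e') @ [j])) = F (e @ e')" by (rule F_snoc)
  qed
  also have "\<dots> = F e" using Suc.prems by (intro Suc.IH) simp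
  finally show ?case .
qed

lemma total:
  assumes "M * na \<le> k" shows "(\<Sum>e\<in>words l na. F e) = 1"
  using snoc_sum[of "[]" 0 na] assms F_Nil by (simp add: words_def)

definition "G e = (if F e = 0 then 0 else F e * ln ((vw p nj e)\<^sup>2 * F e))"

lemma pressure_G: "pressure p l nj \<mu> n = - (\<Sum>e\<in>words l n. G e)"
  unfolding pressure_def G_def by (simp add: Let_def)

lemma pointwise:
  fixes x y z V V' :: real
  assumes x: "x \<ge> 0" and y: "y \<ge> 0" and z: "z \<ge> 0" and xy: "x \<le> y" and xz: "x \<le> z"
    and V: "V > 0" and V': "V' > 0"
  shows "(if x = 0 then 0 else x * ln (V\<^sup>2 * y)) + (if x = 0 then 0 else x * ln (V'\<^sup>2 * z))
         - (if x = 0 then 0 else x * ln ((V * V')\<^sup>2 * x)) \<le> y * z - x"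
proof (cases "x = 0")
  case True then show ?thesis using y z by simp
next
  case False
  then have xp: "x > 0" using x by simp
  have yp: "y > 0" and zp: "z > 0" using xp xy xz by auto
  have V2: "V\<^sup>2 > 0" "V'\<^sup>2 > 0" using V V' by simp_all
  have "x * ln (V\<^sup>2 * y) + x * ln (V'\<^sup>2 * z) - x * ln ((V * V')\<^sup>2 * x)
      = x * (ln y + ln z - ln x)"
    using V2 xp yp zp by (simp add: ln_mult power_mult_distrib algebra_simps)
  also have "ln y + ln z - ln x = ln (y * z / x)"
    using xp yp zp by (simp add: ln_mult ln_div)
  also have "x * ln (y * z / x) \<le> x * (y * z / x - 1)"
    using xp yp zp by (intro mult_left_mono ln_le_minus_one) auto
  also have "\<dots> = y * z - x" using xp by (simp add: field_simps)
  finally show ?thesis using False by simp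
qed

lemma subadd:
  assumes lev: "M * (na + nb) \<le> k"
  shows "pressure p l nj \<mu> (na + nb) \<le> pressure p l nj \<mu> na + pressure p l nj \<mu> nb"
proof -
  have leva: "M * na \<le> k" and levb: "M * nb \<le> k" using lev by (simp_all add: add_mult_distrib2)
  define H1 where "H1 e e' = (if F (e @ e') = 0 then 0 else F (e @ e') * ln ((vw p nj e)\<^sup>2 * F e))" for e e'
  define H2 where "H2 e e' = (if F (e @ e') = 0 then 0 else F (e @ e') * ln ((vw p nj e')\<^sup>2 * F e'))" for e e'
  have fw: "finite (words l n)" for n by (rule finite_words)
  have S1: "(\<Sum>e\<in>words l na. G e) = (\<Sum>e\<in>words l na. \<Sum>e'\<in>words l nb. H1 e e')"
  proof (rule sum.cong[OF refl])
    fix e assume e: "e \<in> words l na"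
    have sum: "(\<Sum>e'\<in>words l nb. F (e @ e')) = F e" by (rule snoc_sum[OF e lev])
    show "G e = (\<Sum>e'\<in>words l nb. H1 e e')"
    proof (cases "F e = 0")
      case True
      then have "\<forall>e'\<in>words l nb. F (e @ e') = 0"
        using sum sum_nonneg_eq_0_iff[OF fw[of nb], of "\<lambda>e'. F (e @ e')"] by simp
      then show ?thesis using True by (simp add: G_def H1_def)
    next
      case False
      have "(\<Sum>e'\<in>words l nb. H1 e e') = (\<Sum>e'\<in>words l nb. F (e @ e') * ln ((vw p nj e)\<^sup>2 * F e))"
        unfolding H1_def by (intro sum.cong refl) simp
      also have "\<dots> = F e * ln ((vw p nj e)\<^sup>2 * F e)" by (simp add: sum_distrib_right[symmetric] sum)
      finally show ?thesis using False by (simp add: G_def)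
    qed
  qed
  have S2: "(\<Sum>e'\<in>words l nb. G e') = (\<Sum>e\<in>words l na. \<Sum>e'\<in>words l nb. H2 e e')"
  proof -
    have "(\<Sum>e'\<in>words l nb. G e') = (\<Sum>e'\<in>words l nb. \<Sum>e\<in>words l na. H2 e e')"
    proof (rule sum.cong[OF refl])
      fix e' assume e': "e' \<in> words l nb"
      have sum: "(\<Sum>e\<in>words l na. F (e @ e')) = F e'" by (rule cons_sum[OF e' lev])
      show "G e' = (\<Sum>e\<in>words l na. H2 e e')"
      proof (cases "F e' = 0")
        case True
        then have "\<forall>e\<in>words l na. F (e @ e') = 0"
          using sum sum_nonneg_eq_0_iff[OF fw[of na], of "\<lambda>e. F (e @ e')"] by simp
        then show ?thesis using True by (simp add: G_def H2_def)
      next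
        case False
        have "(\<Sum>e\<in>words l na. H2 e e') = (\<Sum>e\<in>words l na. F (e @ e') * ln ((vw p nj e')\<^sup>2 * F e'))"
          unfolding H2_def by (intro sum.cong refl) simp
        also have "\<dots> = F e' * ln ((vw p nj e')\<^sup>2 * F e')" by (simp add: sum_distrib_right[symmetric] sum)
        finally show ?thesis using False by (simp add: G_def)
      qed
    qed
    also have "\<dots> = (\<Sum>e\<in>words l na. \<Sum>e'\<in>words l nb. H2 e e')" by (rule sum.swap)
    finally show ?thesis .
  qed
  have S3: "(\<Sum>x\<in>words l (na + nb). G x) = (\<Sum>e\<in>words l na. \<Sum>e'\<in>words l nb. G (e @ e'))"
    by (rule sum_words_app)
  have pw: "H1 e e' + H2 e e' - G (e @ e') \<le> F e * F e' - F (e @ e')"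
    if e: "e \<in> words l na" and e': "e' \<in> words l nb" for e e'
  proof -
    have "F (e @ e') \<le> (\<Sum>x\<in>words l nb. F (e @ x))"
      by (rule member_le_sum[OF e']) (simp_all add: fw)
    then have xy: "F (e @ e') \<le> F e" using snoc_sum[OF e lev] by simp
    have "F (e @ e') \<le> (\<Sum>x\<in>words l na. F (x @ e'))"
      by (rule member_le_sum[OF e]) (simp_all add: fw)
    then have xz: "F (e @ e') \<le> F e'" using cons_sum[OF e' lev] by simp
    have V: "vw p nj e > 0" "vw p nj e' > 0" using vw_pos p2 by auto
    show ?thesis
      using pointwise[OF F_nonneg F_nonneg F_nonneg xy xz V]
      unfolding H1_def H2_def G_def vw_app by simp
  qed
  have "(\<Sum>e\<in>words l na. \<Sum>e'\<in>words l nb. H1 e e' + H2 e e' - G (e @ e'))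
        \<le> (\<Sum>e\<in>words l na. \<Sum>e'\<in>words l nb. F e * F e' - F (e @ e'))"
    using pw by (intro sum_mono) auto
  also have "\<dots> = (\<Sum>e\<in>words l na. F e * (\<Sum>e'\<in>words l nb. F e') - (\<Sum>e'\<in>words l nb. F (e @ e')))"
    by (simp add: sum_subtractf sum_distrib_left)
  also have "\<dots> = (\<Sum>e\<in>words l na. F e * 1 - F e)"
    using total[OF levb] snoc_sum[OF _ lev] by (intro sum.cong refl) simp
  also have "\<dots> = 0" by simp
  finally have "(\<Sum>e\<in>words l na. G e) + (\<Sum>e'\<in>words l nb. G e') - (\<Sum>x\<in>words l (na + nb). G x) \<le> 0"
    unfolding S1 S2 S3 by (simp add: sum_subtractf sum.distrib)
  then show ?thesis unfolding pressure_G by simp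
qed

lemma iter:
  assumes "M * (q * n + r) \<le> k"
  shows "pressure p l nj \<mu> (q * n + r) \<le> real q * pressure p l nj \<mu> n + pressure p l nj \<mu> r"
  using assms
proof (induction q)
  case 0 then show ?case by simp
next
  case (Suc q)
  have eq: "Suc q * n + r = n + (q * n + r)" by simp
  have A: "pressure p l nj \<mu> (Suc q * n + r) \<le> pressure p l nj \<mu> n + pressure p l nj \<mu> (q * n + r)"
    unfolding eq by (rule subadd) (use Suc.prems eq in \<open>simp only:\<close>)
  have "M * (q * n + r) \<le> M * (Suc q * n + r)" by (intro mult_le_mono2) simp
  then have "M * (q * n + r) \<le> k" using Suc.prems by linarith
  then have "pressure p l nj \<mu> (q * n + r) \<le> real q * pressure p l nj \<mu> n + pressure p l nj \<mu> r"
    by (rule Suc.IH)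
  then have "pressure p l nj \<mu> n + pressure p l nj \<mu> (q * n + r)
     \<le> pressure p l nj \<mu> n + (real q * pressure p l nj \<mu> n + pressure p l nj \<mu> r)" by simp
  with A show ?case by (simp add: algebra_simps)
qed

end

lemma Max_pow:
  fixes l :: nat and nj :: "nat \<Rightarrow> nat"
  assumes p2: "p \<ge> (2::nat)" and l1: "l \<ge> 1"
  shows "Max ((\<lambda>j. real p ^ nj j) ` {1..l}) = real p ^ Max (nj ` {1..l})"
proof -
  have mono: "mono (\<lambda>m::nat. real p ^ m)"
    using p2 by (intro monoI power_increasing) auto
  have "real p ^ Max (nj ` {1..l}) = Max ((\<lambda>m. real p ^ m) ` (nj ` {1..l}))"
    by (rule mono_Max_commute[OF mono]) (use l1 in \<open>simp_all\<close>)
  also have "(\<lambda>m. real p ^ m) ` (nj ` {1..l}) = (\<lambda>j. real p ^ nj j) ` {1..l}"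
    by (simp add: image_image)
  finally show ?thesis by simp
qed

theorem proposition4:
  fixes p l k q n r :: nat and nj :: "nat \<Rightarrow> nat"
    and U :: "nat \<Rightarrow> nat \<Rightarrow> complex" and \<psi> :: "nat \<Rightarrow> complex"
  assumes "p \<ge> 2" and "l \<ge> 1"
    and "\<forall>j\<in>{1..l}. nj j \<ge> 1"
    and "(\<Sum>j\<in>{1..l}. 1 / real p ^ nj j) = 1"
    and "is_quantization p l nj (p ^ k) U"
    and "is_normalized_eigenvector (p ^ k) U \<psi>"
    and "q \<ge> 1" and "n \<ge> 1" and "r < n"
    and "int (q * n + r) =
           \<lfloor>ln (real (p ^ k)) / ln (Max ((\<lambda>j. real p ^ nj j) ` {1..l}))\<rfloor>"
  shows "pressure p l nj (mu_of (p ^ k) \<psi>) (q * n + r)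
           \<le> real q * pressure p l nj (mu_of (p ^ k) \<psi>) n
             + pressure p l nj (mu_of (p ^ k) \<psi>) r"
proof -
  interpret wmq p l nj k U \<psi>
    by unfold_locales (use assms in auto)
  have MM: "M = Max (nj ` {1..l})" by (simp add: M_def)
  have lnp: "ln (real p) > 0" using assms(1) by simp
  have e1: "ln (real (p ^ k)) = real k * ln (real p)" using ppos by (simp add: ln_realpow)
  have e2: "ln (real p ^ M) = real M * ln (real p)" using ppos by (simp add: ln_realpow)
  have "ln (real (p ^ k)) / ln (Max ((\<lambda>j. real p ^ nj j) ` {1..l})) = real k / real M"
    unfolding Max_pow[OF assms(1,2)] MM[symmetric] e1 e2 using lnp by simp
  then have fl: "int (q * n + r) = \<lfloor>real k / real M\<rfloor>" using assms(10) by simp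
  have "real (q * n + r) \<le> real k / real M"
    using of_int_floor_le[of "real k / real M"] fl by (metis of_int_of_nat_eq)
  then have "real (q * n + r) * real M \<le> real k" using M_ge1 by (simp add: pos_le_divide_eq)
  then have "M * (q * n + r) \<le> k" by (metis mult.commute of_nat_le_iff of_nat_mult)
  then show ?thesis by (rule iter)
qed

end
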